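(* Let $\mathcal S$ be a complete separable metric space, $\mu$ a boundedly finite Borel measure on $\mathcal S$, $m\ge2$ an integer and $a,\rho,k>0$. Let $N$ be a multivariate generalized Waring process with parameters $a,k,\rho$ and parameter measure $\mu$, and for $i\in\{1,\dots,m\}$ let $N_i(\cdot)=N(\cdot\times\{i\})$. Then: (1) for every $i$, $N_i$ is a generalized Waring process on $\mathcal S$ with parameters $a,k,\rho$ and parameter measure $\mu$; (2) for distinct indices $i_1,\dots,i_l\in\{1,\dots,m\}$, $\sum_{j=1}^lN_{i_j}$ is a generalized Waring process on $\mathcal S$ with parameters $a,\rho$, $k$ and parameter measure $l\mu$ (so that $\sum_j N_{i_j}(A)$ has the $\mathrm{GWD}(a,kl\mu(A);\rho)$ distribution for bounded Borel $A$); (3) for distinct indices $i_1,\dots,i_l\in\{1,\dots,m\}$, the process $(N_{i_1},\dots,N_{i_l})$ is a multivariate generalized Waring process (with $l$ components) with parameters $a,k,\rho$ and parameter measure $\mu$; in particular for all bounded Borel sets $A_1,\dots,A_l\subset\mathcal S$, $(N_{i_1}(A_1),\dots,N_{i_l}(A_l))$ has the $\mathrm{MGWD}(a;k\mu(A_1),\dots,k\mu(A_l);\rho)$ distribution; (4) for every $i$ and all bounded Borel sets $A,B\subset\mathcal S$, $(N_i(A),\sum_{j\ne i}N_j(B))$ has the $\mathrm{MGWD}(a;k\mu(A),(m-1)k\mu(B);\rho)$ (bivariate generalized Waring) distribution.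
   Context: For $x>0$, $\beta\ge0$ write $x_{(\beta)}=\Gamma(x+\beta)/\Gamma(x)$, with $0_{(0)}=1$ and $0_{(n)}=0$ for integers $n\ge1$. For $a,\rho>0$ and $k_1,\dots,k_s\ge 0$, $\mathrm{MGWD}(a;k_1,\dots,k_s;\rho)$ denotes the law on $\{0,1,2,\dots\}^s$ with $P(X_i=x_i,\ i=1,\dots,s)=\frac{\rho_{(\sum_i k_i)}\,a_{(\sum_i x_i)}}{(\rho+a)_{(\sum_i k_i+\sum_i x_i)}}\prod_{i=1}^s\frac{(k_i)_{(x_i)}}{x_i!}$; for $s=1$ it is $\mathrm{GWD}(a,k_1;\rho)$. A point process $N$ on a complete separable metric space $\mathcal S$ is a generalized Waring process with parameters $a,\rho,k>0$ and parameter measure $\mu$ (a boundedly finite Borel measure) if for every finite family of pairwise disjoint bounded Borel sets $A_1,\dots,A_l$, $(N(A_1),\dots,N(A_l))$ has the $\mathrm{MGWD}(a;k\mu(A_1),\dots,k\mu(A_l);\rho)$ distribution. Let $\nu$ be the Borel measure on $\mathcal S\times\{1,\dots,m\}$ given by $\nu(A\times C)=\mu(A)\cdot|C|$ for Borel $A\subset\mathcal S$ and $C\subset\{1,\dots,m\}$ (i.e. $\nu(A\times\{i\})=\mu(A)$). A multivariate generalized Waring process on $\mathcal S$ with parameters $a,k,\rho$ and parameter measure $\mu$ is a generalized Waring process on $\mathcal S\times\{1,\dots,m\}$ with parameters $a,k,\rho$ and parameter measure $\nu$. *)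

theory Defs
  imports "HOL-Probability.Probability"
begin

definition rising :: "real \<Rightarrow> real \<Rightarrow> real" where
  "rising x \<beta> = (if x = 0 then (if \<beta> = 0 then 1 else 0) else Gamma (x + \<beta>) / Gamma x)"

definition mgwd_pmf :: "real \<Rightarrow> real \<Rightarrow> nat \<Rightarrow> (nat \<Rightarrow> real) \<Rightarrow> (nat \<Rightarrow> nat) \<Rightarrow> real" where
  "mgwd_pmf a \<rho> s k x =
     rising \<rho> (\<Sum>i\<in>{1..s}. k i) * rising a (real (\<Sum>i\<in>{1..s}. x i))
     / rising (\<rho> + a) ((\<Sum>i\<in>{1..s}. k i) + real (\<Sum>i\<in>{1..s}. x i))
     * (\<Prod>i\<in>{1..s}. rising (k i) (real (x i)) / fact (x i))"

definition has_mgwd :: "'w measure \<Rightarrow> real \<Rightarrow> real \<Rightarrow> nat \<Rightarrow> (nat \<Rightarrow> real) \<Rightarrow> (nat \<Rightarrow> 'w \<Rightarrow> nat) \<Rightarrow> bool" where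
  "has_mgwd M a \<rho> s k X \<longleftrightarrow>
     (\<forall>i\<in>{1..s}. X i \<in> measurable M (count_space UNIV)) \<and>
     (\<forall>x :: nat \<Rightarrow> nat. measure M {\<omega>\<in>space M. \<forall>i\<in>{1..s}. X i \<omega> = x i} = mgwd_pmf a \<rho> s k x)"

definition point_process_on :: "'b::metric_space set \<Rightarrow> 'w measure \<Rightarrow> ('w \<Rightarrow> 'b set \<Rightarrow> nat) \<Rightarrow> bool" where
  "point_process_on X M N \<longleftrightarrow>
     prob_space M \<and>
     (\<forall>A. A \<in> sets borel \<and> bounded A \<and> A \<subseteq> X \<longrightarrow> (\<lambda>\<omega>. N \<omega> A) \<in> measurable M (count_space UNIV)) \<and>
     (\<forall>\<omega>\<in>space M. N \<omega> {} = 0 \<and>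
        (\<forall>F :: nat \<Rightarrow> 'b set. disjoint_family F \<and> range F \<subseteq> sets borel \<and> (\<Union>(range F)) \<subseteq> X
             \<and> bounded (\<Union>(range F)) \<longrightarrow>
           (\<lambda>n. real (N \<omega> (F n))) sums real (N \<omega> (\<Union>(range F)))))"

text \<open>Generalized Waring process on X with parameters a, k, rho and parameter measure nu
  (nu given as its real-valued set function on bounded Borel sets).\<close>
definition gw_process_on :: "'b::metric_space set \<Rightarrow> 'w measure \<Rightarrow> real \<Rightarrow> real \<Rightarrow> real \<Rightarrow> ('b set \<Rightarrow> real)
     \<Rightarrow> ('w \<Rightarrow> 'b set \<Rightarrow> nat) \<Rightarrow> bool" where
  "gw_process_on X M a k \<rho> \<nu> N \<longleftrightarrow>
     point_process_on X M N \<and>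
     (\<forall>(l::nat) (A :: nat \<Rightarrow> 'b set).
        (\<forall>i\<in>{1..l}. A i \<in> sets borel \<and> bounded (A i) \<and> A i \<subseteq> X) \<and> disjoint_family_on A {1..l} \<longrightarrow>
        has_mgwd M a \<rho> l (\<lambda>i. k * \<nu> (A i)) (\<lambda>i \<omega>. N \<omega> (A i)))"

text \<open>Multivariate generalized Waring process on S with marks {1..m}: a GW process on
  S \<times> {1..m} (marks embedded in the reals, since nat carries no metric in the library) with parameter measure nu(B) = sum_i mu({x. (x,i) \<in> B}), so nu(A \<times> {i}) = mu(A).\<close>
definition mark_measure :: "nat \<Rightarrow> 'a measure \<Rightarrow> ('a \<times> real) set \<Rightarrow> real" where
  "mark_measure m \<mu> B = (\<Sum>i\<in>{1..m}. measure \<mu> {x. (x, real i) \<in> B})"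

definition mgw_process :: "nat \<Rightarrow> 'w measure \<Rightarrow> real \<Rightarrow> real \<Rightarrow> real \<Rightarrow> 'a::metric_space measure
     \<Rightarrow> ('w \<Rightarrow> ('a \<times> real) set \<Rightarrow> nat) \<Rightarrow> bool" where
  "mgw_process m M a k \<rho> \<mu> N \<longleftrightarrow> gw_process_on (UNIV \<times> (real ` {1..m})) M a k \<rho> (mark_measure m \<mu>) N"

end

theory Submission imports Defs begin

lemma times_borel: fixes A :: "'a::polish_space set" and C :: "real set"
  assumes "A \<in> sets borel" "C \<in> sets borel" shows "A \<times> C \<in> sets borel"
proof -
  have "A \<times> C \<in> sets (borel \<Otimes>\<^sub>M (borel::real measure))" using assms by auto
  thus ?thesis by (metis borel_prod)
qed

lemma finite_real_borel: "finite (C::real set) \<Longrightarrow> C \<in> sets borel"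
  by (simp add: borel_closed finite_imp_closed)

lemma slice_borel: fixes B :: "('a::polish_space \<times> real) set"
  assumes "B \<in> sets borel" shows "{x. (x, c) \<in> B} \<in> sets borel"
proof -
  have m: "(\<lambda>x::'a. (x, c)) \<in> borel_measurable borel"
    by (intro borel_measurable_continuous_onI continuous_intros)
  have "(\<lambda>x::'a. (x, c)) -` B \<inter> space borel \<in> sets borel"
    using measurable_sets[OF m assms] .
  thus ?thesis by (simp add: vimage_def)
qed

lemma has_mgwd_cong:
  assumes "has_mgwd M a \<rho> s k X" "\<forall>i\<in>{1..s}. k' i = k i"
    "\<forall>i\<in>{1..s}. \<forall>\<omega>\<in>space M. X' i \<omega> = X i \<omega>"
  shows "has_mgwd M a \<rho> s k' X'"
proof -
  have meas: "\<forall>i\<in>{1..s}. X' i \<in> measurable M (count_space UNIV)"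
  proof
    fix i assume i: "i \<in> {1..s}"
    have "X i \<in> measurable M (count_space UNIV)" using assms(1) i unfolding has_mgwd_def by blast
    then show "X' i \<in> measurable M (count_space UNIV)"
      using measurable_cong[of M "X' i" "X i" "count_space UNIV"] assms(3) i by simp
  qed
  have pmf: "mgwd_pmf a \<rho> s k' x = mgwd_pmf a \<rho> s k x" for x
    unfolding mgwd_pmf_def using assms(2) by simp
  have sets: "{\<omega>\<in>space M. \<forall>i\<in>{1..s}. X' i \<omega> = x i} = {\<omega>\<in>space M. \<forall>i\<in>{1..s}. X i \<omega> = x i}" for x
    using assms(3) by auto
  show ?thesis unfolding has_mgwd_def sets pmf using assms(1) meas unfolding has_mgwd_def by blast
qed

lemma pp_cong:
  assumes "point_process_on X M N"
    "\<forall>\<omega>\<in>space M. \<forall>A. A \<in> sets borel \<and> bounded A \<and> A \<subseteq> X \<longrightarrow> N' \<omega> A = N \<omega> A"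
  shows "point_process_on X M N'"
  unfolding point_process_on_def
proof (intro conjI allI impI ballI)
  show "prob_space M" using assms(1) unfolding point_process_on_def by blast
next
  fix A assume A: "A \<in> sets borel \<and> bounded A \<and> A \<subseteq> X"
  have "(\<lambda>\<omega>. N \<omega> A) \<in> measurable M (count_space UNIV)"
    using assms(1) A unfolding point_process_on_def by blast
  then show "(\<lambda>\<omega>. N' \<omega> A) \<in> measurable M (count_space UNIV)"
    using measurable_cong[of M "\<lambda>\<omega>. N' \<omega> A" "\<lambda>\<omega>. N \<omega> A" "count_space UNIV"] assms(2) A by simp
next
  fix \<omega> assume w: "\<omega> \<in> space M"
  show "N' \<omega> {} = 0" using assms w unfolding point_process_on_def by auto
next
  fix \<omega> and F :: "nat \<Rightarrow> _"
  assume w: "\<omega> \<in> space M" and F: "disjoint_family F \<and> range F \<subseteq> sets borel \<and> \<Union> (range F) \<subseteq> X \<and> bounded (\<Union> (range F))"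
  have s: "(\<lambda>n. real (N \<omega> (F n))) sums real (N \<omega> (\<Union> (range F)))"
    using assms(1) w F unfolding point_process_on_def by blast
  have Fn: "F n \<in> sets borel \<and> bounded (F n) \<and> F n \<subseteq> X" for n
  proof -
    have "F n \<subseteq> \<Union> (range F)" by auto
    then show ?thesis using F bounded_subset by blast
  qed
  have UF: "\<Union> (range F) \<in> sets borel" using F by auto
  have "\<forall>n. N' \<omega> (F n) = N \<omega> (F n)"
    using assms(2) w Fn by blast
  moreover have "N' \<omega> (\<Union> (range F)) = N \<omega> (\<Union> (range F))"
    using assms(2) w F UF by blast
  ultimately show "(\<lambda>n. real (N' \<omega> (F n))) sums real (N' \<omega> (\<Union> (range F)))" using s by simp
qed

lemma gw_cong:
  assumes "gw_process_on X M a k \<rho> \<nu> N"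
    "\<forall>\<omega>\<in>space M. \<forall>A. A \<in> sets borel \<and> bounded A \<and> A \<subseteq> X \<longrightarrow> N' \<omega> A = N \<omega> A"
    "\<forall>A. A \<in> sets borel \<and> bounded A \<and> A \<subseteq> X \<longrightarrow> \<nu>' A = \<nu> A"
  shows "gw_process_on X M a k \<rho> \<nu>' N'"
  unfolding gw_process_on_def
proof (intro conjI allI impI)
  show "point_process_on X M N'" using assms(1,2) pp_cong unfolding gw_process_on_def by blast
next
  fix l :: nat and A :: "nat \<Rightarrow> _"
  assume h: "(\<forall>i\<in>{1..l}. A i \<in> sets borel \<and> bounded (A i) \<and> A i \<subseteq> X) \<and> disjoint_family_on A {1..l}"
  have "has_mgwd M a \<rho> l (\<lambda>i. k * \<nu> (A i)) (\<lambda>i \<omega>. N \<omega> (A i))"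
    using assms(1) h unfolding gw_process_on_def by blast
  then show "has_mgwd M a \<rho> l (\<lambda>i. k * \<nu>' (A i)) (\<lambda>i \<omega>. N' \<omega> (A i))"
    by (rule has_mgwd_cong) (use h assms(2,3) in auto)
qed

lemma pp_finite_add:
  fixes G :: "nat \<Rightarrow> 'b::metric_space set"
  assumes "point_process_on X M N" "\<omega> \<in> space M" "finite I" "disjoint_family_on G I"
    "\<forall>i\<in>I. G i \<in> sets borel \<and> bounded (G i) \<and> G i \<subseteq> X"
  shows "N \<omega> (\<Union>i\<in>I. G i) = (\<Sum>i\<in>I. N \<omega> (G i))"
proof -
  define F where "F n = (if n \<in> I then G n else {})" for n
  have U: "\<Union> (range F) = (\<Union>i\<in>I. G i)" unfolding F_def by auto
  have df: "disjoint_family F" using assms(4) unfolding F_def disjoint_family_on_def by auto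
  have rg: "range F \<subseteq> sets borel" using assms(5) unfolding F_def by auto
  have bd: "bounded (\<Union> (range F))" unfolding U using assms(3,5) by auto
  have sb: "\<Union> (range F) \<subseteq> X" unfolding U using assms(5) by auto
  have e: "N \<omega> {} = 0" using assms(1,2) unfolding point_process_on_def by blast
  have s1: "(\<lambda>n. real (N \<omega> (F n))) sums real (N \<omega> (\<Union> (range F)))"
    using assms(1,2) df rg bd sb unfolding point_process_on_def by blast
  have s2: "(\<lambda>n. real (N \<omega> (F n))) sums (\<Sum>n\<in>I. real (N \<omega> (F n)))"
    by (rule sums_finite) (use assms(3) e in \<open>auto simp: F_def\<close>)
  have "real (N \<omega> (\<Union> (range F))) = (\<Sum>n\<in>I. real (N \<omega> (F n)))"
    using sums_unique2[OF s1 s2] .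
  also have "\<dots> = (\<Sum>n\<in>I. real (N \<omega> (G n)))" by (simp add: F_def)
  finally show ?thesis unfolding U by (metis of_nat_eq_iff of_nat_sum)
qed

lemma gw_push:
  fixes \<phi> :: "'c::metric_space set \<Rightarrow> 'b::metric_space set"
  assumes N: "gw_process_on X M a k \<rho> \<nu> N"
    and phi: "\<forall>A. A \<in> sets borel \<and> bounded A \<and> A \<subseteq> Y \<longrightarrow>
        \<phi> A \<in> sets borel \<and> bounded (\<phi> A) \<and> \<phi> A \<subseteq> X \<and> \<nu>' A = \<nu> (\<phi> A)"
    and e: "\<phi> {} = {}" and d: "\<forall>A B. A \<inter> B = {} \<longrightarrow> \<phi> A \<inter> \<phi> B = {}"
    and u: "\<forall>F::nat \<Rightarrow> 'c set. \<phi> (\<Union> (range F)) = (\<Union>n. \<phi> (F n))"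
  shows "gw_process_on Y M a k \<rho> \<nu>' (\<lambda>\<omega> A. N \<omega> (\<phi> A))"
proof -
  have P: "point_process_on X M N" using N unfolding gw_process_on_def by (rule conjunct1)
  have Pd: "prob_space M \<and>
     (\<forall>A. A \<in> sets borel \<and> bounded A \<and> A \<subseteq> X \<longrightarrow> (\<lambda>\<omega>. N \<omega> A) \<in> measurable M (count_space UNIV)) \<and>
     (\<forall>\<omega>\<in>space M. N \<omega> {} = 0 \<and>
        (\<forall>F :: nat \<Rightarrow> 'b set. disjoint_family F \<and> range F \<subseteq> sets borel \<and> (\<Union>(range F)) \<subseteq> X
             \<and> bounded (\<Union>(range F)) \<longrightarrow>
           (\<lambda>n. real (N \<omega> (F n))) sums real (N \<omega> (\<Union>(range F)))))"
    using P unfolding point_process_on_def .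
  have Pp: "prob_space M" using Pd by (rule conjunct1)
  have Pm: "\<And>A. A \<in> sets borel \<and> bounded A \<and> A \<subseteq> X \<Longrightarrow> (\<lambda>\<omega>. N \<omega> A) \<in> measurable M (count_space UNIV)"
    by (rule Pd[THEN conjunct2, THEN conjunct1, rule_format])
  have P0: "\<And>\<omega>. \<omega> \<in> space M \<Longrightarrow> N \<omega> {} = 0"
    using Pd[THEN conjunct2, THEN conjunct2] by blast
  have Ps: "\<And>\<omega> (F :: nat \<Rightarrow> 'b set). \<omega> \<in> space M \<Longrightarrow> disjoint_family F \<and> range F \<subseteq> sets borel \<and> \<Union>(range F) \<subseteq> X
     \<and> bounded (\<Union>(range F)) \<Longrightarrow> (\<lambda>n. real (N \<omega> (F n))) sums real (N \<omega> (\<Union>(range F)))"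
  proof -
    fix \<omega> and F :: "nat \<Rightarrow> 'b set"
    assume w: "\<omega> \<in> space M" and h: "disjoint_family F \<and> range F \<subseteq> sets borel \<and> \<Union>(range F) \<subseteq> X
     \<and> bounded (\<Union>(range F))"
    have "\<forall>F :: nat \<Rightarrow> 'b set. disjoint_family F \<and> range F \<subseteq> sets borel \<and> (\<Union>(range F)) \<subseteq> X
             \<and> bounded (\<Union>(range F)) \<longrightarrow>
           (\<lambda>n. real (N \<omega> (F n))) sums real (N \<omega> (\<Union>(range F)))"
      using Pd[THEN conjunct2, THEN conjunct2] w by blast
    then show "(\<lambda>n. real (N \<omega> (F n))) sums real (N \<omega> (\<Union>(range F)))" using h by blast
  qed
  have Gd: "\<forall>(l::nat) (A :: nat \<Rightarrow> 'b set).
        (\<forall>i\<in>{1..l}. A i \<in> sets borel \<and> bounded (A i) \<and> A i \<subseteq> X) \<and> disjoint_family_on A {1..l} \<longrightarrow>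
        has_mgwd M a \<rho> l (\<lambda>i. k * \<nu> (A i)) (\<lambda>i \<omega>. N \<omega> (A i))"
    using N unfolding gw_process_on_def by (rule conjunct2)
  have Gw: "\<And>l (A :: nat \<Rightarrow> 'b set). (\<forall>i\<in>{1..l}. A i \<in> sets borel \<and> bounded (A i) \<and> A i \<subseteq> X) \<Longrightarrow> disjoint_family_on A {1..l} \<Longrightarrow>
        has_mgwd M a \<rho> l (\<lambda>i. k * \<nu> (A i)) (\<lambda>i \<omega>. N \<omega> (A i))"
    using Gd by blast
  have phi': "\<And>A. A \<in> sets borel \<Longrightarrow> bounded A \<Longrightarrow> A \<subseteq> Y \<Longrightarrow>
        \<phi> A \<in> sets borel \<and> bounded (\<phi> A) \<and> \<phi> A \<subseteq> X \<and> \<nu>' A = \<nu> (\<phi> A)"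
    by (rule phi[rule_format]) simp
  have phB: "\<And>A. A \<in> sets borel \<Longrightarrow> bounded A \<Longrightarrow> A \<subseteq> Y \<Longrightarrow> \<phi> A \<in> sets borel" using phi' by simp
  have phb: "\<And>A. A \<in> sets borel \<Longrightarrow> bounded A \<Longrightarrow> A \<subseteq> Y \<Longrightarrow> bounded (\<phi> A)" using phi' by simp
  have phX: "\<And>A. A \<in> sets borel \<Longrightarrow> bounded A \<Longrightarrow> A \<subseteq> Y \<Longrightarrow> \<phi> A \<subseteq> X" using phi' by simp
  have phN: "\<And>A. A \<in> sets borel \<Longrightarrow> bounded A \<Longrightarrow> A \<subseteq> Y \<Longrightarrow> \<nu>' A = \<nu> (\<phi> A)" using phi' by simp
  have pp: "point_process_on Y M (\<lambda>\<omega> A. N \<omega> (\<phi> A))"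
    unfolding point_process_on_def
  proof (intro conjI allI impI ballI)
    show "prob_space M" by (rule Pp)
  next
    fix A assume "A \<in> sets borel \<and> bounded A \<and> A \<subseteq> Y"
    then show "(\<lambda>\<omega>. N \<omega> (\<phi> A)) \<in> measurable M (count_space UNIV)"
      using phB phb phX by (intro Pm) simp
  next
    fix \<omega> assume w: "\<omega> \<in> space M"
    show "N \<omega> (\<phi> {}) = 0" using P0 w e by simp
  next
    fix \<omega> and F :: "nat \<Rightarrow> 'c set"
    assume w: "\<omega> \<in> space M" and F: "disjoint_family F \<and> range F \<subseteq> sets borel \<and> \<Union> (range F) \<subseteq> Y \<and> bounded (\<Union> (range F))"
    have Fn: "F n \<in> sets borel \<and> bounded (F n) \<and> F n \<subseteq> Y" for n
    proof -
      have s: "F n \<subseteq> \<Union> (range F)" by auto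
      have b1: "F n \<in> sets borel" using F by (simp add: image_subset_iff)
      have b2: "bounded (F n)" by (rule bounded_subset[OF _ s]) (use F in simp)
      have b3: "F n \<subseteq> Y" using order_trans[OF s] F by simp
      show ?thesis using b1 b2 b3 by simp
    qed
    have UF: "\<Union> (range F) \<in> sets borel" by (rule sets.countable_UN) (use F in simp)
    define G where "G n = \<phi> (F n)" for n
    have dF: "disjoint_family F" using F by (rule conjunct1)
    have dG: "disjoint_family G" unfolding disjoint_family_on_def
    proof (intro ballI impI)
      fix m n :: nat assume "m \<noteq> n"
      then have "F m \<inter> F n = {}" using dF unfolding disjoint_family_on_def by simp
      then show "G m \<inter> G n = {}" unfolding G_def using d by simp
    qed
    have rG: "range G \<subseteq> sets borel"
    proof (rule image_subsetI)
      fix n show "G n \<in> sets borel" unfolding G_def using Fn[of n] phB by simp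
    qed
    have UG: "\<Union> (range G) = \<phi> (\<Union> (range F))" using u unfolding G_def by simp
    have UY: "\<Union> (range F) \<subseteq> Y" and Ub: "bounded (\<Union> (range F))" using F by simp_all
    have "(\<lambda>n. real (N \<omega> (G n))) sums real (N \<omega> (\<Union> (range G)))"
    proof (rule Ps[OF w])
      show "disjoint_family G \<and> range G \<subseteq> sets borel \<and> \<Union> (range G) \<subseteq> X \<and> bounded (\<Union> (range G))"
        unfolding UG using dG rG phX[OF UF Ub UY] phb[OF UF Ub UY] by simp
    qed
    then show "(\<lambda>n. real (N \<omega> (\<phi> (F n)))) sums real (N \<omega> (\<phi> (\<Union> (range F))))"
      unfolding UG unfolding G_def .
  qed
  show ?thesis
    unfolding gw_process_on_def
  proof (intro conjI allI impI)
    show "point_process_on Y M (\<lambda>\<omega> A. N \<omega> (\<phi> A))" by (rule pp)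
  next
    fix l :: nat and A :: "nat \<Rightarrow> 'c set"
    assume h: "(\<forall>i\<in>{1..l}. A i \<in> sets borel \<and> bounded (A i) \<and> A i \<subseteq> Y) \<and> disjoint_family_on A {1..l}"
    have hA: "A i \<in> sets borel" "bounded (A i)" "A i \<subseteq> Y" if "i \<in> {1..l}" for i
      using h that by auto
    have h1: "\<forall>i\<in>{1..l}. \<phi> (A i) \<in> sets borel \<and> bounded (\<phi> (A i)) \<and> \<phi> (A i) \<subseteq> X"
    proof
      fix i assume i: "i \<in> {1..l}"
      show "\<phi> (A i) \<in> sets borel \<and> bounded (\<phi> (A i)) \<and> \<phi> (A i) \<subseteq> X"
        using phB[OF hA[OF i]] phb[OF hA[OF i]] phX[OF hA[OF i]] by (intro conjI)
    qed
    have dA: "disjoint_family_on A {1..l}" using h by (rule conjunct2)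
    have h2: "disjoint_family_on (\<lambda>i. \<phi> (A i)) {1..l}"
      unfolding disjoint_family_on_def
    proof (intro ballI impI)
      fix m n assume "m \<in> {1..l}" "n \<in> {1..l}" "m \<noteq> n"
      then have "A m \<inter> A n = {}" using dA unfolding disjoint_family_on_def by simp
      then show "\<phi> (A m) \<inter> \<phi> (A n) = {}" using d by simp
    qed
    have "has_mgwd M a \<rho> l (\<lambda>i. k * \<nu> (\<phi> (A i))) (\<lambda>i \<omega>. N \<omega> (\<phi> (A i)))"
      by (rule Gw[OF h1 h2])
    moreover have "\<forall>i\<in>{1..l}. k * \<nu>' (A i) = k * \<nu> (\<phi> (A i))"
      using phN[OF hA] by simp
    ultimately show "has_mgwd M a \<rho> l (\<lambda>i. k * \<nu>' (A i)) (\<lambda>i \<omega>. N \<omega> (\<phi> (A i)))"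
      by (rule has_mgwd_cong) simp
  qed
qed

lemma mark_times:
  assumes "S \<subseteq> {1..m}"
  shows "mark_measure m \<mu> (A \<times> real ` S) = real (card S) * measure \<mu> A"
proof -
  have eq: "{x. (x, real i) \<in> A \<times> real ` S} = (if i \<in> S then A else {})" for i
    by (auto simp: image_iff)
  have "mark_measure m \<mu> (A \<times> real ` S) = (\<Sum>i\<in>{1..m}. if i \<in> S then measure \<mu> A else 0)"
    unfolding mark_measure_def eq by (intro sum.cong) auto
  also have "\<dots> = (\<Sum>i\<in>S. measure \<mu> A)"
    using assms by (intro sum.mono_neutral_cong_right) auto
  finally show ?thesis by simp
qed


theorem theorem11:
  fixes M :: "'w measure" and \<mu> :: "'a::polish_space measure"
    and N :: "'w \<Rightarrow> ('a \<times> real) set \<Rightarrow> nat"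
    and m :: nat and a k \<rho> :: real
  assumes mu_borel: "sets \<mu> = sets borel"
    and mu_bfin: "\<forall>A\<in>sets borel. bounded A \<longrightarrow> emeasure \<mu> A < \<infinity>"
    and m2: "m \<ge> 2" and a_pos: "a > 0" and rho_pos: "\<rho> > 0" and k_pos: "k > 0"
    and N: "mgw_process m M a k \<rho> \<mu> N"
  shows
    "(\<forall>i\<in>{1..m}. gw_process_on UNIV M a k \<rho> (measure \<mu>) (\<lambda>\<omega> A. N \<omega> (A \<times> {real i})))
   \<and> (\<forall>(l::nat) (idx :: nat \<Rightarrow> nat). inj_on idx {1..l} \<and> idx ` {1..l} \<subseteq> {1..m} \<longrightarrow>
        gw_process_on UNIV M a k \<rho> (\<lambda>A. real l * measure \<mu> A)
          (\<lambda>\<omega> A. \<Sum>j\<in>{1..l}. N \<omega> (A \<times> {real (idx j)})))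
   \<and> (\<forall>(l::nat) (idx :: nat \<Rightarrow> nat). inj_on idx {1..l} \<and> idx ` {1..l} \<subseteq> {1..m} \<longrightarrow>
        mgw_process l M a k \<rho> \<mu>
          (\<lambda>\<omega> B. N \<omega> {(x, real (idx j)) | x j. (x, real j) \<in> B \<and> j \<in> {1..l}})
        \<and> (\<forall>A :: nat \<Rightarrow> 'a set. (\<forall>j\<in>{1..l}. A j \<in> sets borel \<and> bounded (A j)) \<longrightarrow>
             has_mgwd M a \<rho> l (\<lambda>j. k * measure \<mu> (A j)) (\<lambda>j \<omega>. N \<omega> (A j \<times> {real (idx j)}))))
   \<and> (\<forall>i\<in>{1..m}. \<forall>A B. A \<in> sets borel \<and> bounded A \<and> B \<in> sets borel \<and> bounded B \<longrightarrow>
        has_mgwd M a \<rho> 2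
          (\<lambda>j. if j = 1 then k * measure \<mu> A else real (m - 1) * k * measure \<mu> B)
          (\<lambda>j \<omega>. if j = 1 then N \<omega> (A \<times> {real i}) else (\<Sum>j'\<in>{1..m} - {i}. N \<omega> (B \<times> {real j'}))))"
proof -
  define X0 where "X0 = (UNIV :: 'a set) \<times> real ` {1..m}"
  have NG: "gw_process_on X0 M a k \<rho> (mark_measure m \<mu>) N" using N unfolding mgw_process_def X0_def .
  have NP: "point_process_on X0 M N" using NG unfolding gw_process_on_def by (rule conjunct1)
  have NGd: "\<forall>(l::nat) (A :: nat \<Rightarrow> ('a \<times> real) set).
        (\<forall>i\<in>{1..l}. A i \<in> sets borel \<and> bounded (A i) \<and> A i \<subseteq> X0) \<and> disjoint_family_on A {1..l} \<longrightarrow>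
        has_mgwd M a \<rho> l (\<lambda>i. k * mark_measure m \<mu> (A i)) (\<lambda>i \<omega>. N \<omega> (A i))"
    using NG unfolding gw_process_on_def by (rule conjunct2)
  have prodB: "A \<times> T \<in> sets borel" if "A \<in> sets borel" "finite T" for A :: "'a set" and T :: "real set"
    using times_borel[OF that(1) finite_real_borel[OF that(2)]] .
  have prodb: "bounded (A \<times> T)" if "bounded A" "finite T" for A :: "'a set" and T :: "real set"
    using bounded_Times[OF that(1) finite_imp_bounded[OF that(2)]] .
  have X0sub: "A \<times> real ` S \<subseteq> X0" if "S \<subseteq> {1..m}" for A S
    unfolding X0_def using that by auto
  have P1: "\<forall>i\<in>{1..m}. gw_process_on UNIV M a k \<rho> (measure \<mu>) (\<lambda>\<omega> A. N \<omega> (A \<times> {real i}))"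
  proof
    fix i assume i: "i \<in> {1..m}"
    have sing: "A \<times> {real i} = A \<times> real ` {i}" for A :: "'a set" by simp
    show "gw_process_on UNIV M a k \<rho> (measure \<mu>) (\<lambda>\<omega> A. N \<omega> (A \<times> {real i}))"
    proof (rule gw_push[OF NG])
      show "\<forall>A. A \<in> sets borel \<and> bounded A \<and> A \<subseteq> UNIV \<longrightarrow>
        A \<times> {real i} \<in> sets borel \<and> bounded (A \<times> {real i}) \<and> A \<times> {real i} \<subseteq> X0 \<and>
        measure \<mu> A = mark_measure m \<mu> (A \<times> {real i})"
      proof (intro allI impI conjI)
        fix A :: "'a set" assume A: "A \<in> sets borel \<and> bounded A \<and> A \<subseteq> UNIV"
        show "A \<times> {real i} \<in> sets borel" using prodB A by simp
        show "bounded (A \<times> {real i})" using prodb A by simp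
        show "A \<times> {real i} \<subseteq> X0" using X0sub[of "{i}" A] i by simp
        show "measure \<mu> A = mark_measure m \<mu> (A \<times> {real i})"
          unfolding sing using mark_times[of "{i}" m \<mu> A] i by simp
      qed
    qed auto
  qed
  have P2: "\<forall>(l::nat) (idx :: nat \<Rightarrow> nat). inj_on idx {1..l} \<and> idx ` {1..l} \<subseteq> {1..m} \<longrightarrow>
        gw_process_on UNIV M a k \<rho> (\<lambda>A. real l * measure \<mu> A)
          (\<lambda>\<omega> A. \<Sum>j\<in>{1..l}. N \<omega> (A \<times> {real (idx j)}))"
  proof (intro allI impI)
    fix l :: nat and idx :: "nat \<Rightarrow> nat"
    assume h: "inj_on idx {1..l} \<and> idx ` {1..l} \<subseteq> {1..m}"
    have inj: "inj_on idx {1..l}" and sub: "idx ` {1..l} \<subseteq> {1..m}" using h by simp_all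
    define T where "T = real ` idx ` {1..l}"
    have cardS: "card (idx ` {1..l}) = l" using card_image[OF inj] by simp
    have finT: "finite T" unfolding T_def by simp
    have G1: "gw_process_on UNIV M a k \<rho> (\<lambda>A. real l * measure \<mu> A) (\<lambda>\<omega> A. N \<omega> (A \<times> T))"
    proof (rule gw_push[OF NG])
      show "\<forall>A. A \<in> sets borel \<and> bounded A \<and> A \<subseteq> UNIV \<longrightarrow>
        A \<times> T \<in> sets borel \<and> bounded (A \<times> T) \<and> A \<times> T \<subseteq> X0 \<and>
        real l * measure \<mu> A = mark_measure m \<mu> (A \<times> T)"
      proof (intro allI impI conjI)
        fix A :: "'a set" assume A: "A \<in> sets borel \<and> bounded A \<and> A \<subseteq> UNIV"
        show "A \<times> T \<in> sets borel" using prodB A finT by simp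
        show "bounded (A \<times> T)" using prodb A finT by simp
        show "A \<times> T \<subseteq> X0" unfolding T_def using X0sub sub by simp
        show "real l * measure \<mu> A = mark_measure m \<mu> (A \<times> T)"
          unfolding T_def using mark_times[OF sub, of \<mu> A] cardS by simp
      qed
    qed auto
    show "gw_process_on UNIV M a k \<rho> (\<lambda>A. real l * measure \<mu> A)
          (\<lambda>\<omega> A. \<Sum>j\<in>{1..l}. N \<omega> (A \<times> {real (idx j)}))"
    proof (rule gw_cong[OF G1])
      show "\<forall>\<omega>\<in>space M. \<forall>A. A \<in> sets borel \<and> bounded A \<and> A \<subseteq> UNIV \<longrightarrow>
          (\<Sum>j\<in>{1..l}. N \<omega> (A \<times> {real (idx j)})) = N \<omega> (A \<times> T)"
      proof (intro ballI allI impI)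
        fix \<omega> and A :: "'a set" assume w: "\<omega> \<in> space M" and A: "A \<in> sets borel \<and> bounded A \<and> A \<subseteq> UNIV"
        have U: "(\<Union>j\<in>{1..l}. A \<times> {real (idx j)}) = A \<times> T" unfolding T_def by auto
        have dj: "disjoint_family_on (\<lambda>j. A \<times> {real (idx j)}) {1..l}"
          unfolding disjoint_family_on_def
        proof (intro ballI impI)
          fix p q assume p: "p \<in> {1..l}" and q: "q \<in> {1..l}" and pq: "p \<noteq> q"
          have "idx p \<noteq> idx q" using inj_on_eq_iff[OF inj p q] pq by simp
          then show "A \<times> {real (idx p)} \<inter> A \<times> {real (idx q)} = {}" by auto
        qed
        have gj: "\<forall>j\<in>{1..l}. A \<times> {real (idx j)} \<in> sets borel \<and> bounded (A \<times> {real (idx j)}) \<and> A \<times> {real (idx j)} \<subseteq> X0"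
        proof
          fix j assume j: "j \<in> {1..l}"
          have "A \<times> {real (idx j)} = A \<times> real ` {idx j}" by simp
          moreover have "idx j \<in> {1..m}" using sub j by blast
          then have "{idx j} \<subseteq> {1..m}" by simp
          ultimately show "A \<times> {real (idx j)} \<in> sets borel \<and> bounded (A \<times> {real (idx j)}) \<and> A \<times> {real (idx j)} \<subseteq> X0"
            using prodB prodb A X0sub[of "{idx j}" A] by simp
        qed
        show "(\<Sum>j\<in>{1..l}. N \<omega> (A \<times> {real (idx j)})) = N \<omega> (A \<times> T)"
          using pp_finite_add[OF NP w _ dj gj] U by simp
      qed
    qed simp
  qed
  have P3: "\<forall>(l::nat) (idx :: nat \<Rightarrow> nat). inj_on idx {1..l} \<and> idx ` {1..l} \<subseteq> {1..m} \<longrightarrow>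
        mgw_process l M a k \<rho> \<mu>
          (\<lambda>\<omega> B. N \<omega> {(x, real (idx j)) | x j. (x, real j) \<in> B \<and> j \<in> {1..l}})
        \<and> (\<forall>A :: nat \<Rightarrow> 'a set. (\<forall>j\<in>{1..l}. A j \<in> sets borel \<and> bounded (A j)) \<longrightarrow>
             has_mgwd M a \<rho> l (\<lambda>j. k * measure \<mu> (A j)) (\<lambda>j \<omega>. N \<omega> (A j \<times> {real (idx j)})))"
  proof (intro allI impI conjI)
    fix l :: nat and idx :: "nat \<Rightarrow> nat"
    assume h: "inj_on idx {1..l} \<and> idx ` {1..l} \<subseteq> {1..m}"
    have inj: "inj_on idx {1..l}" and sub: "idx ` {1..l} \<subseteq> {1..m}" using h by simp_all
    let ?phi = "\<lambda>B::('a \<times> real) set. {(x, real (idx j)) | x j. (x, real j) \<in> B \<and> j \<in> {1..l}}"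
    have phiU: "?phi B = (\<Union>j\<in>{1..l}. {x. (x, real j) \<in> B} \<times> {real (idx j)})" for B :: "('a \<times> real) set"
      by auto
    have phiS: "{x. (x, real (idx j)) \<in> ?phi B} = {x. (x, real j) \<in> B}" if "j \<in> {1..l}" for B :: "('a \<times> real) set" and j
    proof (rule Collect_cong)
      fix x show "(x, real (idx j)) \<in> ?phi B \<longleftrightarrow> (x, real j) \<in> B"
      proof
        assume "(x, real (idx j)) \<in> ?phi B"
        then obtain j' where j': "(x, real j') \<in> B" "j' \<in> {1..l}" "idx j = idx j'" by auto
        then show "(x, real j) \<in> B" using inj_on_eq_iff[OF inj that j'(2)] by simp
      next
        assume "(x, real j) \<in> B" then show "(x, real (idx j)) \<in> ?phi B" using that by blast
      qed
    qed
    have phiE: "{x. (x, real i) \<in> ?phi B} = {}" if "i \<notin> idx ` {1..l}" for B :: "('a \<times> real) set" and i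
      using that by auto
    have c1: "\<forall>B. B \<in> sets borel \<and> bounded B \<and> B \<subseteq> UNIV \<times> real ` {1..l} \<longrightarrow>
        ?phi B \<in> sets borel \<and> bounded (?phi B) \<and> ?phi B \<subseteq> X0 \<and>
        mark_measure l \<mu> B = mark_measure m \<mu> (?phi B)"
    proof -
      show "\<forall>B. B \<in> sets borel \<and> bounded B \<and> B \<subseteq> UNIV \<times> real ` {1..l} \<longrightarrow>
        ?phi B \<in> sets borel \<and> bounded (?phi B) \<and> ?phi B \<subseteq> X0 \<and>
        mark_measure l \<mu> B = mark_measure m \<mu> (?phi B)"
      proof (intro allI impI conjI)
        fix B :: "('a \<times> real) set" assume B: "B \<in> sets borel \<and> bounded B \<and> B \<subseteq> UNIV \<times> real ` {1..l}"
        show "?phi B \<in> sets borel"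
          unfolding phiU
        proof (rule sets.finite_UN)
          fix j
          have "B \<in> sets borel" using B by simp
          then have "{x. (x, real j) \<in> B} \<in> sets borel" by (rule slice_borel)
          then show "{x. (x, real j) \<in> B} \<times> {real (idx j)} \<in> sets borel" using prodB by simp
        qed simp
        have psub: "?phi B \<subseteq> fst ` B \<times> real ` {1..m}"
        proof
          fix p assume "p \<in> ?phi B"
          then obtain x j where p: "p = (x, real (idx j))" "(x, real j) \<in> B" "j \<in> {1..l}" by blast
          have "x \<in> fst ` B" using p(2) by (metis fst_conv image_eqI)
          moreover have "idx j \<in> {1..m}" using sub p(3) by blast
          ultimately show "p \<in> fst ` B \<times> real ` {1..m}" using p(1) by simp
        qed
        have "bounded (fst ` B \<times> real ` {1..m})"
        proof (rule prodb)
          have "bounded B" using B by simp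
          then show "bounded (fst ` B)" by (rule bounded_fst)
        qed simp
        then show "bounded (?phi B)" using psub by (rule bounded_subset)
        have "fst ` B \<times> real ` {1..m} \<subseteq> X0" unfolding X0_def by (rule Sigma_mono) simp_all
        with psub show "?phi B \<subseteq> X0" by (rule order_trans)
        have "mark_measure m \<mu> (?phi B) = (\<Sum>i\<in>{1..m}. measure \<mu> {x. (x, real i) \<in> ?phi B})"
          unfolding mark_measure_def ..
        also have "\<dots> = (\<Sum>i\<in>idx ` {1..l}. measure \<mu> {x. (x, real i) \<in> ?phi B})"
        proof (rule sum.mono_neutral_right)
          show "finite {1..m}" by simp
          show "idx ` {1..l} \<subseteq> {1..m}" by (rule sub)
          show "\<forall>i\<in>{1..m} - idx ` {1..l}. measure \<mu> {x. (x, real i) \<in> ?phi B} = 0"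
          proof
            fix i assume "i \<in> {1..m} - idx ` {1..l}"
            then have "i \<notin> idx ` {1..l}" by blast
            then have "{x. (x, real i) \<in> ?phi B} = {}" by (rule phiE)
            then show "measure \<mu> {x. (x, real i) \<in> ?phi B} = 0" by (simp only: measure_empty)
          qed
        qed
        also have "\<dots> = (\<Sum>j\<in>{1..l}. measure \<mu> {x. (x, real (idx j)) \<in> ?phi B})"
          by (rule sum.reindex[OF inj, unfolded comp_def])
        also have "\<dots> = (\<Sum>j\<in>{1..l}. measure \<mu> {x. (x, real j) \<in> B})"
        proof (rule sum.cong)
          fix j assume "j \<in> {1..l}"
          then have "{x. (x, real (idx j)) \<in> ?phi B} = {x. (x, real j) \<in> B}" by (rule phiS)
          then show "measure \<mu> {x. (x, real (idx j)) \<in> ?phi B} = measure \<mu> {x. (x, real j) \<in> B}"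
            by (simp only:)
        qed simp
        also have "\<dots> = mark_measure l \<mu> B" unfolding mark_measure_def ..
        finally show "mark_measure l \<mu> B = mark_measure m \<mu> (?phi B)" by simp
      qed
      qed
    have c2: "?phi {} = {}" by simp
    have c3: "\<forall>A B. A \<inter> B = {} \<longrightarrow> ?phi A \<inter> ?phi B = {}"
      proof (intro allI impI)
        fix A B :: "('a \<times> real) set" assume AB: "A \<inter> B = {}"
        show "?phi A \<inter> ?phi B = {}"
        proof (rule equals0I)
          fix p assume "p \<in> ?phi A \<inter> ?phi B"
          then obtain x j x' j' where p: "p = (x, real (idx j))" "(x, real j) \<in> A" "j \<in> {1..l}"
            and p': "p = (x', real (idx j'))" "(x', real j') \<in> B" "j' \<in> {1..l}" by blast
          have "idx j = idx j'" "x = x'" using p(1) p'(1) by simp_all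
          then have "j = j'" "x = x'" using inj_on_eq_iff[OF inj p(3) p'(3)] by simp_all
          then show False using p(2) p'(2) AB by blast
        qed
      qed
    have c4: "\<forall>F::nat \<Rightarrow> ('a \<times> real) set. ?phi (\<Union> (range F)) = (\<Union>n. ?phi (F n))"
        by blast
    show "mgw_process l M a k \<rho> \<mu>
          (\<lambda>\<omega> B. N \<omega> {(x, real (idx j)) | x j. (x, real j) \<in> B \<and> j \<in> {1..l}})"
      unfolding mgw_process_def by (rule gw_push[OF NG c1 c2 c3 c4])
  next
    fix l :: nat and idx :: "nat \<Rightarrow> nat" and A :: "nat \<Rightarrow> 'a set"
    assume h: "inj_on idx {1..l} \<and> idx ` {1..l} \<subseteq> {1..m}"
      and A: "\<forall>j\<in>{1..l}. A j \<in> sets borel \<and> bounded (A j)"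
    have inj: "inj_on idx {1..l}" and sub: "idx ` {1..l} \<subseteq> {1..m}" using h by simp_all
    have sing: "A j \<times> {real (idx j)} = A j \<times> real ` {idx j}" for j by simp
    have g: "\<forall>j\<in>{1..l}. A j \<times> {real (idx j)} \<in> sets borel \<and> bounded (A j \<times> {real (idx j)}) \<and> A j \<times> {real (idx j)} \<subseteq> X0"
    proof
      fix j assume j: "j \<in> {1..l}"
      have "idx j \<in> {1..m}" using sub j by blast
          then have "{idx j} \<subseteq> {1..m}" by simp
      then show "A j \<times> {real (idx j)} \<in> sets borel \<and> bounded (A j \<times> {real (idx j)}) \<and> A j \<times> {real (idx j)} \<subseteq> X0"
        using prodB prodb A j X0sub[of "{idx j}" "A j"] by simp
    qed
    have dj: "disjoint_family_on (\<lambda>j. A j \<times> {real (idx j)}) {1..l}"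
      unfolding disjoint_family_on_def
    proof (intro ballI impI)
      fix p q assume p: "p \<in> {1..l}" and q: "q \<in> {1..l}" and pq: "p \<noteq> q"
      have "idx p \<noteq> idx q" using inj_on_eq_iff[OF inj p q] pq by simp
      then show "A p \<times> {real (idx p)} \<inter> A q \<times> {real (idx q)} = {}" by auto
    qed
    have "has_mgwd M a \<rho> l (\<lambda>j. k * mark_measure m \<mu> (A j \<times> {real (idx j)})) (\<lambda>j \<omega>. N \<omega> (A j \<times> {real (idx j)}))"
      by (rule NGd[rule_format, OF conjI[OF g dj]])
    moreover have "\<forall>j\<in>{1..l}. k * measure \<mu> (A j) = k * mark_measure m \<mu> (A j \<times> {real (idx j)})"
    proof
      fix j assume j: "j \<in> {1..l}"
      have "idx j \<in> {1..m}" using sub j by blast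
          then have "{idx j} \<subseteq> {1..m}" by simp
      then show "k * measure \<mu> (A j) = k * mark_measure m \<mu> (A j \<times> {real (idx j)})"
        unfolding sing using mark_times[of "{idx j}" m \<mu> "A j"] by simp
    qed
    ultimately show "has_mgwd M a \<rho> l (\<lambda>j. k * measure \<mu> (A j)) (\<lambda>j \<omega>. N \<omega> (A j \<times> {real (idx j)}))"
      by (rule has_mgwd_cong) simp
  qed
  have P4: "\<forall>i\<in>{1..m}. \<forall>A B. A \<in> sets borel \<and> bounded A \<and> B \<in> sets borel \<and> bounded B \<longrightarrow>
        has_mgwd M a \<rho> 2
          (\<lambda>j. if j = 1 then k * measure \<mu> A else real (m - 1) * k * measure \<mu> B)
          (\<lambda>j \<omega>. if j = 1 then N \<omega> (A \<times> {real i}) else (\<Sum>j'\<in>{1..m} - {i}. N \<omega> (B \<times> {real j'})))"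
  proof (intro ballI allI impI)
    fix i and A B :: "'a set" assume i: "i \<in> {1..m}" and AB: "A \<in> sets borel \<and> bounded A \<and> B \<in> sets borel \<and> bounded B"
    define T where "T = real ` ({1..m} - {i})"
    define G where "G j = (if j = (1::nat) then A \<times> {real i} else B \<times> T)" for j
    have sing: "A \<times> {real i} = A \<times> real ` {i}" by simp
    have g: "\<forall>j\<in>{1..2}. G j \<in> sets borel \<and> bounded (G j) \<and> G j \<subseteq> X0"
    proof
      fix j :: nat assume j: "j \<in> {1..2}"
      show "G j \<in> sets borel \<and> bounded (G j) \<and> G j \<subseteq> X0"
      proof (cases "j = 1")
        case True
        then show ?thesis unfolding G_def using prodB prodb AB X0sub[of "{i}" A] i by simp
      next
        case False
        then show ?thesis unfolding G_def T_def using prodB prodb AB X0sub[of "{1..m} - {i}"] by simp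
      qed
    qed
    have dj: "disjoint_family_on G {1..2}"
      unfolding disjoint_family_on_def G_def T_def by auto
    have "has_mgwd M a \<rho> 2 (\<lambda>j. k * mark_measure m \<mu> (G j)) (\<lambda>j \<omega>. N \<omega> (G j))"
      by (rule NGd[rule_format, OF conjI[OF g dj]])
    then show "has_mgwd M a \<rho> 2
          (\<lambda>j. if j = 1 then k * measure \<mu> A else real (m - 1) * k * measure \<mu> B)
          (\<lambda>j \<omega>. if j = 1 then N \<omega> (A \<times> {real i}) else (\<Sum>j'\<in>{1..m} - {i}. N \<omega> (B \<times> {real j'})))"
    proof (rule has_mgwd_cong)
      have cd: "card ({1..m} - {i}) = m - 1" using i by simp
      have m1: "mark_measure m \<mu> (A \<times> {real i}) = measure \<mu> A"
        unfolding sing using mark_times[of "{i}" m \<mu> A] i by simp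
      have m2: "mark_measure m \<mu> (B \<times> T) = real (m - 1) * measure \<mu> B"
        unfolding T_def using mark_times[of "{1..m} - {i}" m \<mu> B] cd by simp
      show "\<forall>j\<in>{1..2}. (if j = 1 then k * measure \<mu> A else real (m - 1) * k * measure \<mu> B) = k * mark_measure m \<mu> (G j)"
        unfolding G_def using m1 m2 by simp
    next
      show "\<forall>j\<in>{1..2}. \<forall>\<omega>\<in>space M. (if j = 1 then N \<omega> (A \<times> {real i}) else (\<Sum>j'\<in>{1..m} - {i}. N \<omega> (B \<times> {real j'}))) = N \<omega> (G j)"
      proof (intro ballI)
        fix j :: nat and \<omega> assume j: "j \<in> {1..2}" and w: "\<omega> \<in> space M"
        have U: "(\<Union>j'\<in>{1..m} - {i}. B \<times> {real j'}) = B \<times> T" unfolding T_def by auto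
        have dj': "disjoint_family_on (\<lambda>j'. B \<times> {real j'}) ({1..m} - {i})"
          unfolding disjoint_family_on_def by auto
        have gj: "\<forall>j'\<in>{1..m} - {i}. B \<times> {real j'} \<in> sets borel \<and> bounded (B \<times> {real j'}) \<and> B \<times> {real j'} \<subseteq> X0"
        proof
          fix j' assume j': "j' \<in> {1..m} - {i}"
          have "B \<times> {real j'} = B \<times> real ` {j'}" by simp
          moreover have "{j'} \<subseteq> {1..m}" using j' by auto
          ultimately show "B \<times> {real j'} \<in> sets borel \<and> bounded (B \<times> {real j'}) \<and> B \<times> {real j'} \<subseteq> X0"
            using prodB prodb AB X0sub[of "{j'}" B] by simp
        qed
        have "N \<omega> (B \<times> T) = (\<Sum>j'\<in>{1..m} - {i}. N \<omega> (B \<times> {real j'}))"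
          using pp_finite_add[OF NP w _ dj' gj] U by simp
        then show "(if j = 1 then N \<omega> (A \<times> {real i}) else (\<Sum>j'\<in>{1..m} - {i}. N \<omega> (B \<times> {real j'}))) = N \<omega> (G j)"
          unfolding G_def by simp
      qed
    qed
  qed
  show ?thesis using P1 P2 P3 P4 by (intro conjI)
qed

end
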